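(* For any two delay functions $\mathbf{d},\mathbf{d}':S_{fd}\to\mathbb{R}_{>0}$ we have $E_{C(\mathbf{d})}=\infty$ if and only if $E_{C(\mathbf{d}')}=\infty$.
   Context: $C=(S,\lambda,\mathrm{P},S_{fd},\mathrm{F},s_{in})$ is a fdCTMC structure: $S$ finite, $\lambda>0$, $\mathrm{P}\in\mathbb{R}_{\ge0}^{S\times S}$ and $\mathrm{F}\in\mathbb{R}_{\ge0}^{S_{fd}\times S}$ stochastic, $S_{fd}\subseteq S$, $s_{in}\in S$. For a delay function $\mathbf{d}$, $C(\mathbf{d})$ has runs $(s_0,d_0)t_0(s_1,d_1)t_1\cdots$, $s_0=s_{in}$, $d_0=\mathbf{d}(s_0)$ if $s_0\in S_{fd}$ else $\infty$; from $(s_i,d_i)$ an $\mathrm{Exp}(\lambda)$ time is sampled; if it is $t_i<d_i$, $s_{i+1}\sim\mathrm{P}(s_i,\cdot)$ with $d_{i+1}=d_i-t_i$ if $s_i,s_{i+1}\in S_{fd}$, $\mathbf{d}(s_{i+1})$ if $s_{i+1}\in S_{fd},s_i\notin S_{fd}$, $\infty$ if $s_{i+1}\notin S_{fd}$; otherwise $t_i=d_i$, $s_{i+1}\sim\mathrm{F}(s_i,\cdot)$, $d_{i+1}=\mathbf{d}(s_{i+1})$ if $s_{i+1}\in S_{fd}$, else $\infty$. A cost structure $(G,\mathcal{R},\mathcal{I}_{\mathrm{P}},\mathcal{I}_{\mathrm{F}})$ is fixed: goal states $G$, rates $\mathcal{R}:S\to\mathbb{R}_{\ge0}$, impulse costs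 $\mathcal{I}_{\mathrm{P}},\mathcal{I}_{\mathrm{F}}:S\times S\to\mathbb{R}_{\ge0}$. The total cost of a run is $\sum_{i<n}(t_i\mathcal{R}(s_i)+I_i)$ for the least $n>0$ with $s_n\in G$, with $I_i=\mathcal{I}_{\mathrm{P}}(s_i,s_{i+1})$ if $t_i<d_i$ and $\mathcal{I}_{\mathrm{F}}(s_i,s_{i+1})$ if $t_i=d_i$, and $\infty$ if no such $n$; $E_{C(\mathbf{d})}$ is its expectation. *)

theory Defs
  imports "HOL-Probability.Probability"
begin

(* fdCTMC structure C = (S, lam, P, Sfd, F, s_in); S is the (finite) universe of the type 's.
   P s t = P(s,t); F s t = F(s,t) (only meaningful for s in Sfd). *)
definition fdCTMC :: "real \<Rightarrow> ('s::finite \<Rightarrow> 's \<Rightarrow> real) \<Rightarrow> 's set \<Rightarrow> ('s \<Rightarrow> 's \<Rightarrow> real) \<Rightarrow> bool" where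
  "fdCTMC lam P Sfd F \<longleftrightarrow> lam > 0
     \<and> (\<forall>s t. P s t \<ge> 0) \<and> (\<forall>s. (\<Sum>t\<in>UNIV. P s t) = 1)
     \<and> (\<forall>s\<in>Sfd. (\<forall>t. F s t \<ge> 0) \<and> (\<Sum>t\<in>UNIV. F s t) = 1)"

definition cost_structure :: "('s \<Rightarrow> real) \<Rightarrow> ('s \<Rightarrow> 's \<Rightarrow> real) \<Rightarrow> ('s \<Rightarrow> 's \<Rightarrow> real) \<Rightarrow> bool" where
  "cost_structure R IP IF \<longleftrightarrow> (\<forall>s. R s \<ge> 0) \<and> (\<forall>s t. IP s t \<ge> 0) \<and> (\<forall>s t. IF s t \<ge> 0)"

(* Randomness consumed by one step: an Exp(lam) time t, and independent successor choices
   ps s ~ P(s,.) and fs s ~ F(s,.) for every state s. *)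
definition step_measure :: "real \<Rightarrow> ('s::finite \<Rightarrow> 's \<Rightarrow> real) \<Rightarrow> 's set \<Rightarrow> ('s \<Rightarrow> 's \<Rightarrow> real)
    \<Rightarrow> (real \<times> ('s \<Rightarrow> 's) \<times> ('s \<Rightarrow> 's)) measure" where
  "step_measure lam P Sfd F =
     density lborel (exponential_density lam) \<Otimes>\<^sub>M
     measure_pmf (pair_pmf (Pi_pmf UNIV undefined (\<lambda>s. embed_pmf (P s)))
                           (Pi_pmf UNIV undefined (\<lambda>s. if s \<in> Sfd then embed_pmf (F s) else return_pmf s)))"

definition run_space :: "real \<Rightarrow> ('s::finite \<Rightarrow> 's \<Rightarrow> real) \<Rightarrow> 's set \<Rightarrow> ('s \<Rightarrow> 's \<Rightarrow> real)
    \<Rightarrow> (nat \<Rightarrow> real \<times> ('s \<Rightarrow> 's) \<times> ('s \<Rightarrow> 's)) measure" where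
  "run_space lam P Sfd F = PiM UNIV (\<lambda>_. step_measure lam P Sfd F)"

definition init_delay :: "'s set \<Rightarrow> ('s \<Rightarrow> real) \<Rightarrow> 's \<Rightarrow> ereal" where
  "init_delay Sfd d s = (if s \<in> Sfd then ereal (d s) else \<infinity>)"

definition trans :: "'s set \<Rightarrow> ('s \<Rightarrow> real) \<Rightarrow> 's \<times> ereal \<Rightarrow> real \<times> ('s \<Rightarrow> 's) \<times> ('s \<Rightarrow> 's) \<Rightarrow> 's \<times> ereal" where
  "trans Sfd d c x = (case c of (s, dl) \<Rightarrow> case x of (t, ps, fs) \<Rightarrow>
     if ereal t < dl then
       (ps s, if ps s \<in> Sfd then (if s \<in> Sfd then dl - ereal t else ereal (d (ps s))) else \<infinity>)
     else (fs s, init_delay Sfd d (fs s)))"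

definition step_cost :: "('s \<Rightarrow> real) \<Rightarrow> ('s \<Rightarrow> 's \<Rightarrow> real) \<Rightarrow> ('s \<Rightarrow> 's \<Rightarrow> real)
    \<Rightarrow> 's \<times> ereal \<Rightarrow> real \<times> ('s \<Rightarrow> 's) \<times> ('s \<Rightarrow> 's) \<Rightarrow> ennreal" where
  "step_cost R IP IF c x = (case c of (s, dl) \<Rightarrow> case x of (t, ps, fs) \<Rightarrow>
     if ereal t < dl then ennreal (t * R s + IP s (ps s))
     else ennreal (real_of_ereal dl * R s + IF s (fs s)))"

primrec cfg :: "'s set \<Rightarrow> ('s \<Rightarrow> real) \<Rightarrow> 's \<Rightarrow> (nat \<Rightarrow> real \<times> ('s \<Rightarrow> 's) \<times> ('s \<Rightarrow> 's)) \<Rightarrow> nat \<Rightarrow> 's \<times> ereal" where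
  "cfg Sfd d s_in \<omega> 0 = (s_in, init_delay Sfd d s_in)"
| "cfg Sfd d s_in \<omega> (Suc i) = trans Sfd d (cfg Sfd d s_in \<omega> i) (\<omega> i)"

definition total_cost :: "'s set \<Rightarrow> 's \<Rightarrow> 's set \<Rightarrow> ('s \<Rightarrow> real) \<Rightarrow> ('s \<Rightarrow> 's \<Rightarrow> real) \<Rightarrow> ('s \<Rightarrow> 's \<Rightarrow> real)
    \<Rightarrow> ('s \<Rightarrow> real) \<Rightarrow> (nat \<Rightarrow> real \<times> ('s \<Rightarrow> 's) \<times> ('s \<Rightarrow> 's)) \<Rightarrow> ennreal" where
  "total_cost Sfd s_in G R IP IF d \<omega> =
     (if \<exists>n>0. fst (cfg Sfd d s_in \<omega> n) \<in> G
      then (\<Sum>i < (LEAST n. n > 0 \<and> fst (cfg Sfd d s_in \<omega> n) \<in> G).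
              step_cost R IP IF (cfg Sfd d s_in \<omega> i) (\<omega> i))
      else \<infinity>)"

definition expected_cost :: "real \<Rightarrow> ('s::finite \<Rightarrow> 's \<Rightarrow> real) \<Rightarrow> 's set \<Rightarrow> ('s \<Rightarrow> 's \<Rightarrow> real) \<Rightarrow> 's
    \<Rightarrow> 's set \<Rightarrow> ('s \<Rightarrow> real) \<Rightarrow> ('s \<Rightarrow> 's \<Rightarrow> real) \<Rightarrow> ('s \<Rightarrow> 's \<Rightarrow> real) \<Rightarrow> ('s \<Rightarrow> real) \<Rightarrow> ennreal" where
  "expected_cost lam P Sfd F s_in G R IP IF d =
     (\<integral>\<^sup>+ \<omega>. total_cost Sfd s_in G R IP IF d \<omega> \<partial>run_space lam P Sfd F)"

end

theory Submission
  imports Defs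
begin

lemma step_space_sets: "sets (step_measure lam P Sfd F) = sets (borel \<Otimes>\<^sub>M count_space UNIV)"
  unfolding step_measure_def
  by (intro sets_pair_measure_cong) auto

definition trans_k where
  "trans_k Sfd d k s y = (if ereal (fst (snd y)) < snd (fst y) then
       (fst k s, if fst k s \<in> Sfd then (if s \<in> Sfd then snd (fst y) - ereal (fst (snd y)) else ereal (d (fst k s))) else \<infinity>)
     else (snd k s, init_delay Sfd d (snd k s)))"

declare [[show_types]]
lemma trans_measurable:
  fixes Sfd :: "'a::finite set"
  shows "(\<lambda>(c,x). trans Sfd d c x) \<in> measurable ((count_space UNIV \<Otimes>\<^sub>M borel) \<Otimes>\<^sub>M (borel \<Otimes>\<^sub>M count_space UNIV))
      (count_space UNIV \<Otimes>\<^sub>M (borel :: ereal measure))"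
proof -
  let ?N = "(count_space UNIV \<Otimes>\<^sub>M borel) \<Otimes>\<^sub>M (borel \<Otimes>\<^sub>M count_space UNIV)"
  have g1: "(\<lambda>y::('a \<times> ereal) \<times> real \<times> ('a \<Rightarrow> 'a) \<times> ('a \<Rightarrow> 'a). fst (fst y)) \<in> measurable ?N (count_space UNIV)"
    by measurable
  have g2: "(\<lambda>y::('a \<times> ereal) \<times> real \<times> ('a \<Rightarrow> 'a) \<times> ('a \<Rightarrow> 'a). snd (snd y)) \<in> measurable ?N (count_space UNIV)"
    by measurable
  have f: "(\<lambda>y::('a \<times> ereal) \<times> real \<times> ('a \<Rightarrow> 'a) \<times> ('a \<Rightarrow> 'a). trans_k Sfd d k s y) \<in> measurable ?N (count_space UNIV \<Otimes>\<^sub>M borel)" for k s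
    unfolding trans_k_def by measurable
  have h: "(\<lambda>y::('a \<times> ereal) \<times> real \<times> ('a \<Rightarrow> 'a) \<times> ('a \<Rightarrow> 'a). trans_k Sfd d (snd (snd y)) s y) \<in> measurable ?N (count_space UNIV \<Otimes>\<^sub>M borel)" for s
    by (rule measurable_compose_countable'[where f="\<lambda>k (y::('a \<times> ereal) \<times> real \<times> ('a \<Rightarrow> 'a) \<times> ('a \<Rightarrow> 'a)). trans_k Sfd d k s y" and g="\<lambda>y::('a \<times> ereal) \<times> real \<times> ('a \<Rightarrow> 'a) \<times> ('a \<Rightarrow> 'a). snd (snd y)", OF f g2]) (auto intro: countable_finite)
  have "(\<lambda>y::('a \<times> ereal) \<times> real \<times> ('a \<Rightarrow> 'a) \<times> ('a \<Rightarrow> 'a). trans_k Sfd d (snd (snd y)) (fst (fst y)) y) \<in> measurable ?N (count_space UNIV \<Otimes>\<^sub>M borel)"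
    by (rule measurable_compose_countable'[where f="\<lambda>s y. trans_k Sfd d (snd (snd y)) s y" and g="\<lambda>y::('a \<times> ereal) \<times> real \<times> ('a \<Rightarrow> 'a) \<times> ('a \<Rightarrow> 'a). fst (fst y)", OF h g1]) (auto intro: countable_finite)
  then show ?thesis
    by (rule measurable_cong[THEN iffD1, rotated]) (auto simp: trans_def trans_k_def split: prod.splits)
qed

definition edge :: "('s \<Rightarrow> 's \<Rightarrow> real) \<Rightarrow> ('s \<Rightarrow> 's \<Rightarrow> real) \<Rightarrow> 's set \<Rightarrow> 's \<Rightarrow> 's \<Rightarrow> bool" where
  "edge P F Sfd s t \<longleftrightarrow> P s t \<noteq> 0 \<or> (s \<in> Sfd \<and> F s t \<noteq> 0)"

inductive_set Areach for P F :: "'s \<Rightarrow> 's \<Rightarrow> real" and Sfd G :: "'s set" and s0 :: 's where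
  A0: "s0 \<in> Areach P F Sfd G s0"
| AS: "s \<in> Areach P F Sfd G s0 \<Longrightarrow> edge P F Sfd s t \<Longrightarrow> t \<notin> G \<Longrightarrow> t \<in> Areach P F Sfd G s0"

inductive reachG for P F :: "'s \<Rightarrow> 's \<Rightarrow> real" and Sfd G :: "'s set" where
  R1: "edge P F Sfd s t \<Longrightarrow> t \<in> G \<Longrightarrow> reachG P F Sfd G s"
| R2: "edge P F Sfd s t \<Longrightarrow> reachG P F Sfd G t \<Longrightarrow> reachG P F Sfd G s"

inductive avoidZ for P F :: "'s \<Rightarrow> 's \<Rightarrow> real" and Sfd G :: "'s set" where
  Z1: "\<not> reachG P F Sfd G s \<Longrightarrow> avoidZ P F Sfd G s"
| Z2: "edge P F Sfd s t \<Longrightarrow> t \<notin> G \<Longrightarrow> avoidZ P F Sfd G t \<Longrightarrow> avoidZ P F Sfd G s"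

definition Bad where
  "Bad P F Sfd G s0 \<longleftrightarrow> (\<exists>u\<in>Areach P F Sfd G s0. \<not> reachG P F Sfd G u)"

lemma Areach_avoidZ: "t \<in> Areach P F Sfd G s0 \<Longrightarrow> avoidZ P F Sfd G t \<Longrightarrow> avoidZ P F Sfd G s0"
  by (induction rule: Areach.induct) (auto intro: avoidZ.intros)

lemma Bad_avoidZ: "Bad P F Sfd G s0 \<Longrightarrow> avoidZ P F Sfd G s0"
  unfolding Bad_def by (auto intro: Areach_avoidZ avoidZ.intros)

lemma nn_integral_pos_on:
  assumes h: "h \<in> borel_measurable N" and E: "{x\<in>space N. Q x} \<in> sets N" "emeasure N {x\<in>space N. Q x} > 0"
    and ae: "AE x in N. Q x \<longrightarrow> h x > 0"
  shows "(\<integral>\<^sup>+x. h x \<partial>N) > 0"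
proof (rule ccontr)
  assume "\<not> ?thesis"
  then have "(\<integral>\<^sup>+x. h x \<partial>N) = 0" by (simp add: not_less)
  then have "AE x in N. h x = 0" using h by (simp add: nn_integral_0_iff_AE)
  with ae have "AE x in N. \<not> Q x" by eventually_elim auto
  then have "emeasure N {x\<in>space N. Q x} = 0"
    using AE_iff_measurable[OF _ refl, of N "\<lambda>x. \<not> Q x"] E(1) by simp
  with E(2) show False by simp
qed

lemma int_compl:
  assumes N: "prob_space N" and h[measurable]: "h \<in> borel_measurable N" and le: "AE x in N. h x \<le> 1"
  shows "(\<integral>\<^sup>+x. h x \<partial>N) = 1 - (\<integral>\<^sup>+x. 1 - h x \<partial>N) \<and> (\<integral>\<^sup>+x. 1 - h x \<partial>N) \<le> 1"
proof -
  have "(\<integral>\<^sup>+x. h x \<partial>N) + (\<integral>\<^sup>+x. 1 - h x \<partial>N) = (\<integral>\<^sup>+x. h x + (1 - h x) \<partial>N)"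
    by (rule nn_integral_add[symmetric]) auto
  also have "\<dots> = (\<integral>\<^sup>+x. 1 \<partial>N)"
    using le by (intro nn_integral_cong_AE) (auto simp: add_diff_self_ennreal)
  also have "\<dots> = 1" using prob_space.emeasure_space_1[OF N] by simp
  finally have sum: "(\<integral>\<^sup>+x. h x \<partial>N) + (\<integral>\<^sup>+x. 1 - h x \<partial>N) = 1" .
  then have g1: "(\<integral>\<^sup>+x. 1 - h x \<partial>N) \<le> 1" by (metis le_iff_add add.commute)
  then have "(\<integral>\<^sup>+x. 1 - h x \<partial>N) \<noteq> top" by (metis ennreal_one_less_top leD top_greatest order_antisym)
  then have "(\<integral>\<^sup>+x. h x \<partial>N) = 1 - (\<integral>\<^sup>+x. 1 - h x \<partial>N)"
    using sum by (metis ennreal_add_diff_cancel_right)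
  with g1 show ?thesis by simp
qed

lemma one_minus_lt1: "0 < (a::ennreal) \<Longrightarrow> a \<le> 1 \<Longrightarrow> 1 - a < 1"
  by (subst minus_less_iff_ennreal) (auto simp: top_unique intro: le_less_trans[of a 1 top])

lemma int_gap:
  assumes N: "prob_space N" and h[measurable]: "h \<in> borel_measurable N" and le: "AE x in N. h x \<le> 1"
    and E[measurable]: "Measurable.pred N E" and hr: "AE x in N. E x \<longrightarrow> h x \<le> r"
  shows "(\<integral>\<^sup>+x. h x \<partial>N) \<le> 1 - (1 - r) * emeasure N {x\<in>space N. E x}"
proof -
  note ic = int_compl[OF N h le]
  have "(1 - r) * emeasure N {x\<in>space N. E x} = (\<integral>\<^sup>+x. (1 - r) * indicator {x\<in>space N. E x} x \<partial>N)"
    by (rule nn_integral_cmult_indicator[symmetric]) measurable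
  also have "\<dots> \<le> (\<integral>\<^sup>+x. 1 - h x \<partial>N)"
  proof (rule nn_integral_mono_AE)
    show "AE x in N. (1 - r) * indicator {x\<in>space N. E x} x \<le> 1 - h x"
      using hr by eventually_elim (auto intro: ennreal_minus_mono split: split_indicator)
  qed
  finally have "(1 - r) * emeasure N {x\<in>space N. E x} \<le> (\<integral>\<^sup>+x. 1 - h x \<partial>N)" .
  then show ?thesis using ic by (auto intro: ennreal_minus_mono)
qed

lemma sum_block_bound:
  fixes f :: "nat \<Rightarrow> ennreal"
  assumes L: "L > 0" and b: "0 \<le> b" "b < 1" and f: "\<And>i. f i \<le> ennreal (b ^ (i div L))"
  shows "suminf f < top"
proof -
  have geo: "(\<Sum>m<n. b ^ m) \<le> 1 / (1 - b)" for n
  proof -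
    have "summable (\<lambda>m. b ^ m)" using b by (intro summable_geometric) auto
    then have "(\<Sum>m<n. b ^ m) \<le> (\<Sum>m. b ^ m)" using b by (intro sum_le_suminf) auto
    also have "\<dots> = 1 / (1 - b)" using b by (intro suminf_geometric) auto
    finally show ?thesis .
  qed
  have part: "(\<Sum>i<n. f i) \<le> ennreal (real L / (1 - b))" for n
  proof -
    have "(\<Sum>i<n. f i) \<le> (\<Sum>i<n * L. f i)"
      using L by (intro sum_mono2) auto
    also have "\<dots> = (\<Sum>m<n. \<Sum>i\<in>{m * L..<m * L + L}. f i)"
      by (rule sum.nat_group[symmetric])
    also have "\<dots> \<le> (\<Sum>m<n. \<Sum>i\<in>{m * L..<m * L + L}. ennreal (b ^ m))"
    proof (intro sum_mono)
      fix m i assume "i \<in> {m * L..<m * L + L}"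
      then have "i div L = m" using L by (auto intro: div_nat_eqI simp: mult.commute)
      then show "f i \<le> ennreal (b ^ m)" using f[of i] by simp
    qed
    also have "\<dots> = ennreal (real L * (\<Sum>m<n. b ^ m))"
      using b by (simp add: sum_distrib_left ennreal_of_nat_eq_real_of_nat ennreal_mult'' sum_ennreal[symmetric])
    also have "\<dots> \<le> ennreal (real L / (1 - b))"
    proof (intro ennreal_leI)
      have "real L * (\<Sum>m<n. b ^ m) \<le> real L * (1 / (1 - b))" by (intro mult_left_mono geo) auto
      then show "real L * (\<Sum>m<n. b ^ m) \<le> real L / (1 - b)" by simp
    qed
    finally show ?thesis .
  qed
  have "suminf f = (SUP n. \<Sum>i<n. f i)" by (rule suminf_eq_SUP)
  also have "\<dots> \<le> ennreal (real L / (1 - b))" by (intro SUP_least part)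
  also have "\<dots> < top" by simp
  finally show ?thesis .
qed

locale fdc =
  fixes lam :: real and P F :: "'s::finite \<Rightarrow> 's \<Rightarrow> real" and Sfd :: "'s set"
  assumes ctmc: "fdCTMC lam P Sfd F"
begin

abbreviation "M \<equiv> step_measure lam P Sfd F"
abbreviation "\<Omega> \<equiv> run_space lam P Sfd F"

lemma lam_pos: "lam > 0" using ctmc by (simp add: fdCTMC_def)

lemma prob_M: "prob_space M"
  unfolding step_measure_def
  by (intro prob_space_pair prob_space_exponential_density lam_pos prob_space_measure_pmf)

sublocale S: sequence_space M
  using prob_M by (simp add: sequence_space_def product_prob_space_def product_sigma_finite_def
     product_prob_space_axioms_def prob_space_imp_sigma_finite)

lemma Omega_eq: "\<Omega> = S.S" by (simp add: run_space_def)

lemma sets_M: "sets M = sets (borel \<Otimes>\<^sub>M count_space UNIV)"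
  by (rule step_space_sets)

lemma nn_integral_split:
  assumes f: "f \<in> borel_measurable \<Omega>"
  shows "(\<integral>\<^sup>+\<omega>. f \<omega> \<partial>\<Omega>) = (\<integral>\<^sup>+x. \<integral>\<^sup>+\<omega>. f (case_nat x \<omega>) \<partial>\<Omega> \<partial>M)"
proof -
  have m: "(\<lambda>(s, \<omega>). case_nat s \<omega>) \<in> measurable (M \<Otimes>\<^sub>M S.S) S.S"
    by simp
  have "(\<integral>\<^sup>+\<omega>. f \<omega> \<partial>\<Omega>) = (\<integral>\<^sup>+\<omega>. f \<omega> \<partial>distr (M \<Otimes>\<^sub>M S.S) S.S (\<lambda>(s, \<omega>). case_nat s \<omega>))"
    by (simp add: S.PiM_iter Omega_eq)
  also have "\<dots> = (\<integral>\<^sup>+p. f (case_nat (fst p) (snd p)) \<partial>(M \<Otimes>\<^sub>M S.S))"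
    using f by (subst nn_integral_distr[OF m]) (auto simp: Omega_eq split_beta')
  also have "\<dots> = (\<integral>\<^sup>+x. \<integral>\<^sup>+\<omega>. f (case_nat x \<omega>) \<partial>S.S \<partial>M)"
    using f m by (subst S.nn_integral_fst[symmetric]) (auto simp: Omega_eq split_beta' intro!: measurable_compose[OF _ f])
  finally show ?thesis by (simp add: Omega_eq)
qed


abbreviation "De \<equiv> density lborel (exponential_density lam)"
abbreviation "qP \<equiv> Pi_pmf UNIV undefined (\<lambda>s. embed_pmf (P s))"
abbreviation "qF \<equiv> Pi_pmf UNIV undefined (\<lambda>s. if s \<in> Sfd then embed_pmf (F s) else return_pmf s)"

lemma M_eq: "M = De \<Otimes>\<^sub>M measure_pmf (pair_pmf qP qF)"
  by (simp add: step_measure_def)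

lemma P_nonneg: "P s t \<ge> 0" using ctmc by (simp add: fdCTMC_def)
lemma P_sum: "(\<integral>\<^sup>+t. ennreal (P s t) \<partial>count_space UNIV) = 1"
  using ctmc by (simp add: fdCTMC_def nn_integral_count_space_finite sum_ennreal P_nonneg)
lemma F_nonneg: "s \<in> Sfd \<Longrightarrow> F s t \<ge> 0" using ctmc by (simp add: fdCTMC_def)
lemma F_sum: "s \<in> Sfd \<Longrightarrow> (\<integral>\<^sup>+t. ennreal (F s t) \<partial>count_space UNIV) = 1"
  using ctmc by (simp add: fdCTMC_def nn_integral_count_space_finite sum_ennreal F_nonneg)

lemma pmf_P: "pmf (embed_pmf (P s)) t = P s t"
  by (rule pmf_embed_pmf[OF P_nonneg P_sum])
lemma set_P: "set_pmf (embed_pmf (P s)) = {t. P s t \<noteq> 0}"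
  by (rule set_embed_pmf[OF P_nonneg P_sum])
lemma pmf_F: "s \<in> Sfd \<Longrightarrow> pmf (embed_pmf (F s)) t = F s t"
  by (rule pmf_embed_pmf[OF F_nonneg F_sum])
lemma set_F: "s \<in> Sfd \<Longrightarrow> set_pmf (embed_pmf (F s)) = {t. F s t \<noteq> 0}"
  by (rule set_embed_pmf[OF F_nonneg F_sum])

lemma emeasure_qP: "emeasure (measure_pmf (pair_pmf qP qF)) {p. fst p s = v} = ennreal (P s v)"
proof -
  have "map_pmf (\<lambda>p. fst p s) (pair_pmf qP qF) = map_pmf (\<lambda>f. f s) (map_pmf fst (pair_pmf qP qF))"
    by (simp add: pmf.map_comp o_def)
  also have "\<dots> = embed_pmf (P s)"
    by (simp add: map_fst_pair_pmf Pi_pmf_component)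
  finally have e: "map_pmf (\<lambda>p. fst p s) (pair_pmf qP qF) = embed_pmf (P s)" .
  have "emeasure (measure_pmf (pair_pmf qP qF)) {p. fst p s = v} = emeasure (measure_pmf (map_pmf (\<lambda>p. fst p s) (pair_pmf qP qF))) {v}"
    by (simp add: vimage_def)
  also have "\<dots> = ennreal (P s v)"
    by (simp add: e emeasure_pmf_single pmf_P)
  finally show ?thesis .
qed

lemma emeasure_qF: "s \<in> Sfd \<Longrightarrow> emeasure (measure_pmf (pair_pmf qP qF)) {p. snd p s = v} = ennreal (F s v)"
proof -
  assume s: "s \<in> Sfd"
  have "map_pmf (\<lambda>p. snd p s) (pair_pmf qP qF) = map_pmf (\<lambda>f. f s) (map_pmf snd (pair_pmf qP qF))"
    by (simp add: pmf.map_comp o_def)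
  also have "\<dots> = embed_pmf (F s)"
    using s by (simp add: map_snd_pair_pmf Pi_pmf_component)
  finally have e: "map_pmf (\<lambda>p. snd p s) (pair_pmf qP qF) = embed_pmf (F s)" .
  have "emeasure (measure_pmf (pair_pmf qP qF)) {p. snd p s = v} = emeasure (measure_pmf (map_pmf (\<lambda>p. snd p s) (pair_pmf qP qF))) {v}"
    by (simp add: vimage_def)
  also have "\<dots> = ennreal (F s v)"
    by (simp add: e emeasure_pmf_single pmf_F s)
  finally show ?thesis .
qed

lemma De_prob: "prob_space De" by (rule prob_space_exponential_density[OF lam_pos])

lemma De_atMost: "a \<ge> 0 \<Longrightarrow> emeasure De {..a} = ennreal (1 - exp (- lam * a))"
  using emeasure_erlang_density[OF lam_pos, of 0 a] by (simp add: erlang_CDF_0)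

lemma De_gt_pos: "emeasure De {a<..} > 0"
proof -
  define b where "b = max a 0"
  have "{b<..} \<subseteq> {a<..}" by (auto simp: b_def)
  then have le: "emeasure De {b<..} \<le> emeasure De {a<..}" by (intro emeasure_mono) auto
  have "{b<..} = space De - {..b}" by auto
  moreover have "emeasure De (space De - {..b}) = emeasure De (space De) - emeasure De {..b}"
    by (rule emeasure_compl) (simp_all add: De_atMost b_def)
  ultimately have "emeasure De {b<..} = emeasure De (space De) - emeasure De {..b}" by simp
  also have "\<dots> = ennreal (exp (- lam * b))"
  proof -
    have "0 \<le> lam * b" using lam_pos by (simp add: b_def)
    then have q: "0 \<le> 1 - exp (- (lam * b))" by simp
    show ?thesis
      using prob_space.emeasure_space_1[OF De_prob] De_atMost[of b] ennreal_minus[OF q, of 1]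
      by (simp add: b_def ennreal_1[symmetric] del: ennreal_1)
  qed
  finally show ?thesis using le by (metis exp_gt_zero ennreal_less_zero_iff order_less_le_trans)
qed

lemma De_lt_pos: "a > 0 \<Longrightarrow> emeasure De {..<a} > 0"
proof -
  assume a: "a > 0"
  have "{..a/2} \<subseteq> {..<a}" using a by auto
  then have le: "emeasure De {..a/2} \<le> emeasure De {..<a}" by (intro emeasure_mono) auto
  have "exp (- lam * (a/2)) < 1" using a lam_pos by simp
  then have "emeasure De {..a/2} > 0" using a by (simp add: De_atMost)
  then show ?thesis using le by auto
qed

lemma M_Times: "A \<in> sets borel \<Longrightarrow> emeasure M (A \<times> B) = emeasure De A * emeasure (measure_pmf (pair_pmf qP qF)) B"
  unfolding M_eq by (rule measure_pmf.emeasure_pair_measure_Times) auto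


lemma measure_q_UNIV: "emeasure (measure_pmf (pair_pmf qP qF)) UNIV = 1"
  by (simp add: measure_pmf.emeasure_space_1[simplified])

lemma meas_ps[measurable]: "(\<lambda>x. fst (snd x) s) \<in> measurable M (count_space UNIV)"
  unfolding M_eq by (rule measurable_compose[OF measurable_snd]) simp
lemma meas_fs[measurable]: "(\<lambda>x. snd (snd x) s) \<in> measurable M (count_space UNIV)"
  unfolding M_eq by (rule measurable_compose[OF measurable_snd]) simp
lemma meas_t[measurable]: "fst \<in> measurable M borel"
  unfolding M_eq by (rule measurable_compose[OF measurable_fst]) simp

lemma pos_P_edge:
  assumes "P s v > 0" "dl > 0"
  shows "emeasure M {x\<in>space M. ereal (fst x) < dl \<and> fst (snd x) s = v} > 0"
proof -
  define a where "a = (if dl = \<infinity> then 1 else real_of_ereal dl)"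
  have a: "a > 0" "ereal a \<le> dl" using assms(2) by (cases dl; auto simp: a_def)+
  have sub: "{..<a} \<times> {p. fst p s = v} \<subseteq> {x\<in>space M. ereal (fst x) < dl \<and> fst (snd x) s = v}"
    using a(2) by (auto simp: M_eq space_pair_measure intro: less_le_trans[of _ "ereal a"])
  have "emeasure M ({..<a} \<times> {p. fst p s = v}) > 0"
    using De_lt_pos[OF a(1)] assms(1) by (simp add: M_Times emeasure_qP ennreal_zero_less_mult_iff)
  also have "\<dots> \<le> emeasure M {x\<in>space M. ereal (fst x) < dl \<and> fst (snd x) s = v}"
    by (rule emeasure_mono[OF sub]) measurable
  finally show ?thesis .
qed

lemma pos_F_edge:
  assumes "s \<in> Sfd" "F s v > 0" "dl < \<infinity>"
  shows "emeasure M {x\<in>space M. \<not> ereal (fst x) < dl \<and> snd (snd x) s = v} > 0"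
proof -
  define a where "a = real_of_ereal dl"
  have sub: "{a<..} \<times> {p. snd p s = v} \<subseteq> {x\<in>space M. \<not> ereal (fst x) < dl \<and> snd (snd x) s = v}"
    using assms(3) by (cases dl) (auto simp: M_eq space_pair_measure a_def)
  have "emeasure M ({a<..} \<times> {p. snd p s = v}) > 0"
    using De_gt_pos[of a] assms(1,2) by (simp add: M_Times emeasure_qF ennreal_zero_less_mult_iff)
  also have "\<dots> \<le> emeasure M {x\<in>space M. \<not> ereal (fst x) < dl \<and> snd (snd x) s = v}"
    by (rule emeasure_mono[OF sub]) measurable
  finally show ?thesis .
qed

lemma F_fire_lb:
  assumes "dl \<le> ereal Dm"
  shows "emeasure M {x\<in>space M. \<not> ereal (fst x) < dl} \<ge> emeasure De {Dm<..}"
proof -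
  have sub: "{Dm<..} \<times> UNIV \<subseteq> {x\<in>space M. \<not> ereal (fst x) < dl}"
    using assms by (auto simp: M_eq space_pair_measure) (metis ereal_less_eq(3) not_le order_trans less_imp_le)
  have "emeasure De {Dm<..} = emeasure M ({Dm<..} \<times> UNIV)"
    by (simp add: M_Times measure_q_UNIV)
  also have "\<dots> \<le> emeasure M {x\<in>space M. \<not> ereal (fst x) < dl}"
    by (rule emeasure_mono[OF sub]) measurable
  finally show ?thesis .
qed

lemma AE_good: "AE x in M. 0 \<le> fst x \<and> (\<forall>s. P s (fst (snd x) s) \<noteq> 0) \<and> (\<forall>s\<in>Sfd. F s (snd (snd x) s) \<noteq> 0)"
proof -
  interpret De: prob_space De by (rule De_prob)
  interpret pair_sigma_finite De "measure_pmf (pair_pmf qP qF)"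
    by (intro pair_sigma_finite.intro prob_space_imp_sigma_finite De_prob prob_space_measure_pmf)
  have q: "AE y in measure_pmf (pair_pmf qP qF). (\<forall>s. P s (fst y s) \<noteq> 0) \<and> (\<forall>s\<in>Sfd. F s (snd y s) \<noteq> 0)"
    unfolding AE_measure_pmf_iff
    by (auto simp: set_Pi_pmf PiE_dflt_def set_P set_F split: if_splits)
  have t: "AE t in De. 0 \<le> t"
    by (subst AE_density) (auto simp: exponential_density_def)
  show ?thesis
    unfolding M_eq
    apply (rule AE_pair_measure)
     apply measurable
    using t q by (auto elim!: AE_mp)
qed

end

abbreviation "CS \<equiv> count_space UNIV \<Otimes>\<^sub>M (borel :: ereal measure)"

locale fdcd = fdc lam P F Sfd for lam :: real and P F :: "'s::finite \<Rightarrow> 's \<Rightarrow> real" and Sfd :: "'s set" +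
  fixes G :: "'s set" and d :: "'s \<Rightarrow> real"
  assumes dpos: "\<forall>s\<in>Sfd. d s > 0"
begin

primrec run :: "'s \<times> ereal \<Rightarrow> (nat \<Rightarrow> real \<times> ('s \<Rightarrow> 's) \<times> ('s \<Rightarrow> 's)) \<Rightarrow> nat \<Rightarrow> 's \<times> ereal" where
  "run c \<omega> 0 = c"
| "run c \<omega> (Suc n) = trans Sfd d (run c \<omega> n) (\<omega> n)"

lemma run_shift: "run c (case_nat x \<omega>) (Suc n) = run (trans Sfd d c x) \<omega> n"
  by (induction n) auto

lemma cfg_run: "cfg Sfd d s \<omega> n = run (s, init_delay Sfd d s) \<omega> n"
  by (induction n) auto

lemma run_meas: "(\<lambda>p. run (fst p) (snd p) n) \<in> measurable (CS \<Otimes>\<^sub>M \<Omega>) CS"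
proof (induction n)
  case 0
  show ?case by (simp only: run.simps) (rule measurable_fst)
next
  case (Suc n)
  have c: "(\<lambda>p::('s \<times> ereal) \<times> (nat \<Rightarrow> real \<times> ('s \<Rightarrow> 's) \<times> ('s \<Rightarrow> 's)). snd p n) \<in> measurable (CS \<Otimes>\<^sub>M \<Omega>) (borel \<Otimes>\<^sub>M count_space UNIV)"
  proof -
    have "(\<lambda>p::('s \<times> ereal) \<times> (nat \<Rightarrow> real \<times> ('s \<Rightarrow> 's) \<times> ('s \<Rightarrow> 's)). snd p n) \<in> measurable (CS \<Otimes>\<^sub>M \<Omega>) M"
      unfolding run_space_def
      by (rule measurable_compose[OF measurable_snd measurable_component_singleton]) (rule UNIV_I)
    then show ?thesis by (simp only: measurable_cong_sets[OF refl sets_M])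
  qed
  have "(\<lambda>p. (run (fst p) (snd p) n, snd p n)) \<in> measurable (CS \<Otimes>\<^sub>M \<Omega>) (CS \<Otimes>\<^sub>M (borel \<Otimes>\<^sub>M count_space UNIV))"
    using Suc c by (rule measurable_Pair)
  from measurable_compose[OF this trans_measurable[of Sfd d]] show ?case by (simp only: run.simps split_conv)
qed

lemma run_meas1: "(\<lambda>\<omega>. run c \<omega> n) \<in> measurable \<Omega> CS"
  using measurable_compose_Pair1[OF _ run_meas, of c n] by (simp add: space_pair_measure)

lemma run_state_meas[measurable]: "(\<lambda>p. fst (run (fst p) (snd p) n)) \<in> measurable (CS \<Otimes>\<^sub>M \<Omega>) (count_space UNIV)"
  using measurable_compose[OF run_meas measurable_fst] by simp

definition nohit :: "nat \<Rightarrow> 's \<times> ereal \<Rightarrow> (nat \<Rightarrow> real \<times> ('s \<Rightarrow> 's) \<times> ('s \<Rightarrow> 's)) \<Rightarrow> bool" where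
  "nohit k c \<omega> \<longleftrightarrow> (\<forall>n\<in>{1..k}. fst (run c \<omega> n) \<notin> G)"

definition nohitinf where
  "nohitinf c \<omega> \<longleftrightarrow> (\<forall>n>0. fst (run c \<omega> n) \<notin> G)"

lemma ball_Suc: "(\<forall>n\<in>{1..Suc k}. Q n) \<longleftrightarrow> Q (Suc 0) \<and> (\<forall>m\<in>{1..k}. Q (Suc m))"
proof safe
  fix n assume "Q (Suc 0)" "\<forall>m\<in>{1..k}. Q (Suc m)" "n \<in> {1..Suc k}"
  then show "Q n" by (cases n) (auto, metis Suc_le_eq atLeastAtMost_iff not_gr0 One_nat_def)
qed auto

lemma nohit_Suc: "nohit (Suc k) c (case_nat x \<omega>) \<longleftrightarrow> fst (trans Sfd d c x) \<notin> G \<and> nohit k (trans Sfd d c x) \<omega>"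
proof -
  have "nohit (Suc k) c (case_nat x \<omega>) \<longleftrightarrow> fst (run c (case_nat x \<omega>) (Suc 0)) \<notin> G \<and> (\<forall>m\<in>{1..k}. fst (run c (case_nat x \<omega>) (Suc m)) \<notin> G)"
    unfolding nohit_def by (rule ball_Suc)
  then show ?thesis unfolding nohit_def run_shift by simp
qed

lemma nohitinf_Suc: "nohitinf c (case_nat x \<omega>) \<longleftrightarrow> fst (trans Sfd d c x) \<notin> G \<and> nohitinf (trans Sfd d c x) \<omega>"
proof -
  have "nohitinf c (case_nat x \<omega>) \<longleftrightarrow> (\<forall>m. fst (run c (case_nat x \<omega>) (Suc m)) \<notin> G)"
    unfolding nohitinf_def by (metis gr0_implies_Suc zero_less_Suc)
  also have "\<dots> \<longleftrightarrow> (\<forall>m. fst (run (trans Sfd d c x) \<omega> m) \<notin> G)" by (simp only: run_shift)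
  also have "\<dots> \<longleftrightarrow> fst (trans Sfd d c x) \<notin> G \<and> nohitinf (trans Sfd d c x) \<omega>"
    unfolding nohitinf_def by (metis gr0_implies_Suc run.simps(1) zero_less_Suc not0_implies_Suc)
  finally show ?thesis .
qed

lemma nohit_pred[measurable]: "Measurable.pred (CS \<Otimes>\<^sub>M \<Omega>) (\<lambda>p. nohit k (fst p) (snd p))"
  unfolding nohit_def by measurable

lemma nohitinf_pred[measurable]: "Measurable.pred (CS \<Otimes>\<^sub>M \<Omega>) (\<lambda>p. nohitinf (fst p) (snd p))"
  unfolding nohitinf_def by measurable


lemma nohit_meas1[measurable]: "Measurable.pred \<Omega> (nohit k c)"
  using measurable_compose_Pair1[OF _ nohit_pred, of c k] by (simp add: space_pair_measure)
lemma nohitinf_meas1[measurable]: "Measurable.pred \<Omega> (nohitinf c)"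
  using measurable_compose_Pair1[OF _ nohitinf_pred, of c] by (simp add: space_pair_measure)

lemma trans_meas1[measurable]: "(\<lambda>x. trans Sfd d c x) \<in> measurable M CS"
proof -
  have "(\<lambda>x. trans Sfd d c x) \<in> measurable (borel \<Otimes>\<^sub>M count_space UNIV) CS"
    using measurable_compose_Pair1[OF _ trans_measurable[of Sfd d], of c] by (simp add: space_pair_measure)
  then show ?thesis by (simp only: measurable_cong_sets[OF sets_M refl])
qed

definition Q :: "nat \<Rightarrow> 's \<times> ereal \<Rightarrow> ennreal" where
  "Q k c = (\<integral>\<^sup>+\<omega>. (if nohit k c \<omega> then 1 else 0) \<partial>\<Omega>)"
definition Qi :: "'s \<times> ereal \<Rightarrow> ennreal" where
  "Qi c = (\<integral>\<^sup>+\<omega>. (if nohitinf c \<omega> then 1 else 0) \<partial>\<Omega>)"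

lemma Q_meas[measurable]: "(\<lambda>c. Q k c) \<in> borel_measurable CS"
  unfolding Q_def Omega_eq
  apply (rule S.borel_measurable_nn_integral)
  unfolding Omega_eq[symmetric] by measurable

lemma Qi_meas[measurable]: "(\<lambda>c. Qi c) \<in> borel_measurable CS"
  unfolding Qi_def Omega_eq
  apply (rule S.borel_measurable_nn_integral)
  unfolding Omega_eq[symmetric] by measurable

lemma Q_Suc: "Q (Suc k) c = (\<integral>\<^sup>+x. (if fst (trans Sfd d c x) \<in> G then 0 else Q k (trans Sfd d c x)) \<partial>M)"
  unfolding Q_def
  by (subst nn_integral_split) (auto simp: nohit_Suc intro!: nn_integral_cong)

lemma Qi_rec: "Qi c = (\<integral>\<^sup>+x. (if fst (trans Sfd d c x) \<in> G then 0 else Qi (trans Sfd d c x)) \<partial>M)"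
  unfolding Qi_def
  by (subst nn_integral_split) (auto simp: nohitinf_Suc intro!: nn_integral_cong)

lemma Omega_space1: "emeasure \<Omega> (space \<Omega>) = 1"
  by (simp add: Omega_eq S.emeasure_space_1)

lemma Q_0: "Q 0 c = 1"
  unfolding Q_def nohit_def using Omega_space1 by simp

lemma Q_le1: "Q k c \<le> 1"
proof -
  have "Q k c \<le> (\<integral>\<^sup>+\<omega>. 1 \<partial>\<Omega>)" unfolding Q_def by (intro nn_integral_mono) auto
  then show ?thesis using Omega_space1 by simp
qed

lemma nohit_mono: "k \<le> k' \<Longrightarrow> nohit k' c \<omega> \<Longrightarrow> nohit k c \<omega>"
  unfolding nohit_def by auto

lemma Q_mono: "k \<le> k' \<Longrightarrow> Q k' c \<le> Q k c"
  unfolding Q_def by (intro nn_integral_mono) (auto dest: nohit_mono)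

lemma Qi_le_Q: "Qi c \<le> Q k c"
  unfolding Q_def Qi_def by (intro nn_integral_mono) (auto simp: nohitinf_def nohit_def)


definition Dm where "Dm = (\<Sum>s\<in>Sfd. d s)"

lemma d_le_Dm: "s \<in> Sfd \<Longrightarrow> d s \<le> Dm"
  unfolding Dm_def using dpos by (intro member_le_sum) auto

definition valid :: "'s \<times> ereal \<Rightarrow> bool" where
  "valid c \<longleftrightarrow> (fst c \<in> Sfd \<longrightarrow> 0 < snd c \<and> snd c \<le> ereal Dm) \<and> (fst c \<notin> Sfd \<longrightarrow> snd c = \<infinity>)"

lemma valid_init: "valid (u, init_delay Sfd d u)"
  using dpos d_le_Dm by (auto simp: valid_def init_delay_def)

definition good :: "real \<times> ('s \<Rightarrow> 's) \<times> ('s \<Rightarrow> 's) \<Rightarrow> bool" where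
  "good x \<longleftrightarrow> 0 \<le> fst x \<and> (\<forall>s. P s (fst (snd x) s) \<noteq> 0) \<and> (\<forall>s\<in>Sfd. F s (snd (snd x) s) \<noteq> 0)"

lemma AE_good': "AE x in M. good x"
  using AE_good unfolding good_def .

lemma trans_good:
  assumes v: "valid c" and x: "good x"
  shows "valid (trans Sfd d c x) \<and> edge P F Sfd (fst c) (fst (trans Sfd d c x))"
proof -
  obtain s dl where c: "c = (s, dl)" by (cases c)
  obtain t ps fs where xx: "x = (t, ps, fs)" by (cases x)
  have t0: "0 \<le> t" and ps: "P s (ps s) \<noteq> 0" and fs: "s \<in> Sfd \<Longrightarrow> F s (fs s) \<noteq> 0"
    using x by (auto simp: good_def xx)
  show ?thesis
  proof (cases "ereal t < dl")
    case True
    have val: "valid (ps s, if ps s \<in> Sfd then (if s \<in> Sfd then dl - ereal t else ereal (d (ps s))) else \<infinity>)"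
    proof (cases "ps s \<in> Sfd")
      case pin: True
      show ?thesis
      proof (cases "s \<in> Sfd")
        case sin: True
        then have "0 < dl" "dl \<le> ereal Dm" using v by (auto simp: valid_def c)
        then obtain r where r: "dl = ereal r" by (cases dl) auto
        show ?thesis using pin sin True t0 \<open>dl \<le> ereal Dm\<close> by (auto simp: valid_def r)
      next
        case False
        then show ?thesis using pin dpos d_le_Dm by (auto simp: valid_def)
      qed
    next
      case False
      then show ?thesis by (simp add: valid_def)
    qed
    then show ?thesis using True ps by (simp add: trans_def c xx edge_def)
  next
    case False
    then have sin: "s \<in> Sfd" using v by (auto simp: valid_def c)
    show ?thesis using False sin fs[OF sin] valid_init by (simp add: trans_def c xx edge_def)
  qed
qed

lemma Q_Z: "valid c \<Longrightarrow> \<not> reachG P F Sfd G (fst c) \<Longrightarrow> Q k c = 1"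
proof (induction k arbitrary: c)
  case 0
  then show ?case by (simp add: Q_0)
next
  case (Suc k)
  have "Q (Suc k) c = (\<integral>\<^sup>+x. 1 \<partial>M)"
    unfolding Q_Suc
  proof (rule nn_integral_cong_AE)
    show "AE x in M. (if fst (trans Sfd d c x) \<in> G then 0 else Q k (trans Sfd d c x)) = 1"
      using AE_good'
    proof eventually_elim
      case (elim x)
      from trans_good[OF Suc.prems(1) elim] have tv: "valid (trans Sfd d c x)" and e: "edge P F Sfd (fst c) (fst (trans Sfd d c x))" by auto
      have nG: "fst (trans Sfd d c x) \<notin> G" using e Suc.prems(2) by (auto intro: reachG.intros)
      have "\<not> reachG P F Sfd G (fst (trans Sfd d c x))" using e Suc.prems(2) by (auto intro: reachG.intros)
      then show ?case using nG Suc.IH[OF tv] by simp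
    qed
  qed
  also have "\<dots> = 1" using prob_space.emeasure_space_1[OF prob_M] by simp
  finally show ?case .
qed

lemma Qi_INF: "Qi c = (INF k. Q k c)"
proof -
  have "(\<integral>\<^sup>+\<omega>. (INF k. (if nohit k c \<omega> then 1 else 0)) \<partial>\<Omega>) = (INF k. (\<integral>\<^sup>+\<omega>. (if nohit k c \<omega> then 1 else 0) \<partial>\<Omega>))"
  proof (rule nn_integral_monotone_convergence_INF_decseq)
    show "decseq (\<lambda>k \<omega>. if nohit k c \<omega> then 1 else 0::ennreal)"
      by (rule decseq_SucI) (auto simp: le_fun_def nohit_def)
    show "(\<lambda>\<omega>. if nohit i c \<omega> then 1 else 0::ennreal) \<in> borel_measurable \<Omega>" for i by measurable
    show "(\<integral>\<^sup>+\<omega>. (if nohit i c \<omega> then 1 else 0) \<partial>\<Omega>) < \<infinity>" for i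
      using Q_le1[of i c] unfolding Q_def by (rule le_less_trans) simp
  qed
  moreover have "(INF k. (if nohit k c \<omega> then 1 else 0::ennreal)) = (if nohitinf c \<omega> then 1 else 0)" for \<omega>
  proof (cases "nohitinf c \<omega>")
    case True
    then have "\<forall>k. nohit k c \<omega>" by (auto simp: nohitinf_def nohit_def)
    then show ?thesis using True by simp
  next
    case False
    then obtain n where n: "n > 0" "fst (run c \<omega> n) \<in> G" by (auto simp: nohitinf_def)
    then have "\<not> nohit n c \<omega>" by (auto simp: nohit_def)
    then have "(INF k. (if nohit k c \<omega> then 1 else 0::ennreal)) \<le> 0"
      by (intro INF_lower2[of n]) auto
    then show ?thesis using False by simp
  qed
  ultimately show ?thesis by (simp add: Qi_def Q_def)
qed

lemma Qi_Z: "valid c \<Longrightarrow> \<not> reachG P F Sfd G (fst c) \<Longrightarrow> Qi c = 1"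
  by (simp add: Qi_INF Q_Z)

lemma edge_set_pos:
  assumes v: "valid c" and e: "edge P F Sfd (fst c) u"
  shows "emeasure M {x\<in>space M. fst (trans Sfd d c x) = u} > 0"
proof -
  obtain s dl where c: "c = (s, dl)" by (cases c)
  show ?thesis
  proof (cases "P s u \<noteq> 0")
    case True
    then have Ppos: "P s u > 0" using P_nonneg[of s u] by simp
    have dl: "dl > 0" using v by (cases "s \<in> Sfd") (auto simp: valid_def c)
    have "{x\<in>space M. ereal (fst x) < dl \<and> fst (snd x) s = u} \<subseteq> {x\<in>space M. fst (trans Sfd d c x) = u}"
      by (auto simp: trans_def c)
    then have "emeasure M {x\<in>space M. ereal (fst x) < dl \<and> fst (snd x) s = u} \<le> emeasure M {x\<in>space M. fst (trans Sfd d c x) = u}"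
      by (intro emeasure_mono) measurable
    then show ?thesis using pos_P_edge[OF Ppos dl] by simp
  next
    case False
    then have sin: "s \<in> Sfd" and Fpos: "F s u > 0" using e F_nonneg[of s u] by (auto simp: edge_def c)
    have dl: "dl < \<infinity>" using v sin by (auto simp: valid_def c)
    have "{x\<in>space M. \<not> ereal (fst x) < dl \<and> snd (snd x) s = u} \<subseteq> {x\<in>space M. fst (trans Sfd d c x) = u}"
      by (auto simp: trans_def c)
    then have "emeasure M {x\<in>space M. \<not> ereal (fst x) < dl \<and> snd (snd x) s = u} \<le> emeasure M {x\<in>space M. fst (trans Sfd d c x) = u}"
      by (intro emeasure_mono) measurable
    then show ?thesis using pos_F_edge[OF sin Fpos dl] by simp
  qed
qed

lemma Qi_pos: "avoidZ P F Sfd G s \<Longrightarrow> valid c \<Longrightarrow> fst c = s \<Longrightarrow> Qi c > 0"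
proof (induction arbitrary: c rule: avoidZ.induct)
  case (Z1 s)
  then show ?case using Qi_Z by simp
next
  case (Z2 s t)
  show ?case
    unfolding Qi_rec[of c]
  proof (rule nn_integral_pos_on[where Q="\<lambda>x. fst (trans Sfd d c x) = t"])
    show "emeasure M {x\<in>space M. fst (trans Sfd d c x) = t} > 0"
      using edge_set_pos[OF Z2.prems(1)] Z2.hyps(1) Z2.prems(2) by simp
    show "AE x in M. fst (trans Sfd d c x) = t \<longrightarrow> 0 < (if fst (trans Sfd d c x) \<in> G then 0 else Qi (trans Sfd d c x))"
      using AE_good'
    proof eventually_elim
      case (elim x)
      from trans_good[OF Z2.prems(1) elim] have tv: "valid (trans Sfd d c x)" by auto
      show ?case using Z2.hyps(2) Z2.IH[OF tv] by auto
    qed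
  qed measurable
qed


lemma lt1_aux:
  assumes v: "valid c" and e: "edge P F Sfd (fst c) t"
    and IH: "\<And>c'. valid c' \<Longrightarrow> fst c' = t \<Longrightarrow> t \<notin> G \<Longrightarrow> Q k c' < 1"
  shows "Q (Suc k) c < 1"
proof -
  define h where "h x = (if fst (trans Sfd d c x) \<in> G then 0 else Q k (trans Sfd d c x))" for x
  have hm[measurable]: "h \<in> borel_measurable M" unfolding h_def by measurable
  have hle: "AE x in M. h x \<le> 1" by (auto simp: h_def Q_le1)
  note ic = int_compl[OF prob_M hm hle]
  have pos: "(\<integral>\<^sup>+x. 1 - h x \<partial>M) > 0"
  proof (rule nn_integral_pos_on[where Q="\<lambda>x. fst (trans Sfd d c x) = t"])
    show "emeasure M {x\<in>space M. fst (trans Sfd d c x) = t} > 0"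
      using edge_set_pos[OF v e] .
    show "AE x in M. fst (trans Sfd d c x) = t \<longrightarrow> 0 < 1 - h x"
      using AE_good'
    proof eventually_elim
      case (elim x)
      from trans_good[OF v elim] have tv: "valid (trans Sfd d c x)" by auto
      show ?case using IH[OF tv] by (auto simp: h_def diff_gr0_ennreal)
    qed
  qed measurable
  have "Q (Suc k) c = (\<integral>\<^sup>+x. h x \<partial>M)" unfolding Q_Suc h_def ..
  also have "\<dots> < 1" using ic pos one_minus_lt1 by simp
  finally show ?thesis .
qed

lemma Q_lt1: "reachG P F Sfd G s \<Longrightarrow> \<exists>k. \<forall>c. valid c \<and> fst c = s \<longrightarrow> Q k c < 1"
proof (induction rule: reachG.induct)
  case (R1 s t)
  then show ?case by (intro exI[of _ "Suc 0"] allI impI lt1_aux[of _ t]) auto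
next
  case (R2 s t)
  then obtain k where "\<forall>c. valid c \<and> fst c = t \<longrightarrow> Q k c < 1" by auto
  then show ?case using R2 by (intro exI[of _ "Suc k"] allI impI lt1_aux[of _ t]) auto
qed


lemma Q_T:
  assumes inv_step: "\<And>c x. I c \<Longrightarrow> good x \<Longrightarrow> fst (trans Sfd d c x) \<notin> G \<Longrightarrow> I (trans Sfd d c x)"
    and B: "\<And>c. I c \<Longrightarrow> Q k c \<le> B"
  shows "I c \<Longrightarrow> Q (j + k) c \<le> B * Q j c"
proof (induction j arbitrary: c)
  case 0
  then show ?case using B by (simp add: Q_0)
next
  case (Suc j)
  have "Q (Suc j + k) c = (\<integral>\<^sup>+x. (if fst (trans Sfd d c x) \<in> G then 0 else Q (j + k) (trans Sfd d c x)) \<partial>M)"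
    using Q_Suc[of "j + k" c] by simp
  also have "\<dots> \<le> (\<integral>\<^sup>+x. B * (if fst (trans Sfd d c x) \<in> G then 0 else Q j (trans Sfd d c x)) \<partial>M)"
  proof (rule nn_integral_mono_AE)
    show "AE x in M. (if fst (trans Sfd d c x) \<in> G then 0 else Q (j + k) (trans Sfd d c x)) \<le> B * (if fst (trans Sfd d c x) \<in> G then 0 else Q j (trans Sfd d c x))"
      using AE_good'
    proof eventually_elim
      case (elim x)
      show ?case using Suc.IH[OF inv_step[OF Suc.prems elim]] by auto
    qed
  qed
  also have "\<dots> = B * Q (Suc j) c"
    unfolding Q_Suc by (rule nn_integral_cmult) measurable
  finally show ?case .
qed

context
  fixes s0 :: 's
  assumes nb: "\<not> Bad P F Sfd G s0"
begin

lemma Ar_finite: "finite (Areach P F Sfd G s0)" by simp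

lemma Ar_reach: "u \<in> Areach P F Sfd G s0 \<Longrightarrow> reachG P F Sfd G u"
  using nb by (auto simp: Bad_def)

definition kk where "kk u = (SOME k. \<forall>c. valid c \<and> fst c = u \<longrightarrow> Q k c < 1)"

lemma kk: "u \<in> Areach P F Sfd G s0 \<Longrightarrow> valid c \<Longrightarrow> fst c = u \<Longrightarrow> Q (kk u) c < 1"
  using someI_ex[OF Q_lt1[OF Ar_reach]] unfolding kk_def by blast

definition KK where "KK = Max (kk ` Areach P F Sfd G s0)"

lemma KK: "u \<in> Areach P F Sfd G s0 \<Longrightarrow> valid c \<Longrightarrow> fst c = u \<Longrightarrow> Q KK c < 1"
proof -
  assume a: "u \<in> Areach P F Sfd G s0" "valid c" "fst c = u"
  have "kk u \<le> KK" unfolding KK_def using a(1) by (intro Max_ge) auto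
  then have "Q KK c \<le> Q (kk u) c" by (rule Q_mono)
  also have "\<dots> < 1" using kk[OF a] .
  finally show ?thesis .
qed

definition fresh where "fresh u = (u, init_delay Sfd d u)"

definition rho where "rho = Max ((\<lambda>u. Q KK (fresh u)) ` Areach P F Sfd G s0)"

lemma rho_ge: "u \<in> Areach P F Sfd G s0 \<Longrightarrow> Q KK (fresh u) \<le> rho"
  unfolding rho_def by (intro Max_ge) auto

lemma rho_lt1: "rho < 1"
proof -
  have "rho \<in> (\<lambda>u. Q KK (fresh u)) ` Areach P F Sfd G s0"
    unfolding rho_def by (intro Max_in) (auto intro: Areach.A0)
  then show ?thesis using KK valid_init by (auto simp: fresh_def)
qed

definition e0 where "e0 = emeasure De {Dm<..}"

definition beta where "beta = max rho (1 - (1 - rho) * e0)"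

lemma beta_lt1: "beta < 1"
proof -
  have "0 < 1 - rho" using rho_lt1 by (simp add: diff_gr0_ennreal)
  moreover have "0 < e0" unfolding e0_def by (rule De_gt_pos)
  ultimately have p: "0 < (1 - rho) * e0" by (simp add: ennreal_zero_less_mult_iff)
  have "e0 \<le> 1" unfolding e0_def using prob_space.emeasure_le_1[OF De_prob] .
  moreover have "1 - rho \<le> 1" by simp
  ultimately have "(1 - rho) * e0 \<le> 1 * 1" by (intro mult_mono) auto
  then have "1 - (1 - rho) * e0 < 1" using p by (intro one_minus_lt1) auto
  then show ?thesis using rho_lt1 by (simp add: beta_def)
qed

definition Inv where "Inv c \<longleftrightarrow> valid c \<and> fst c \<in> Areach P F Sfd G s0"

lemma Inv_step: "Inv c \<Longrightarrow> good x \<Longrightarrow> fst (trans Sfd d c x) \<notin> G \<Longrightarrow> Inv (trans Sfd d c x)"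
  using trans_good[of c x] by (auto simp: Inv_def intro: Areach.AS)

lemma Inv_init: "Inv (s0, init_delay Sfd d s0)"
  using valid_init by (auto simp: Inv_def intro: Areach.A0)

lemma bound: "Inv c \<Longrightarrow> Q (Suc KK) c \<le> beta"
proof -
  assume I: "Inv c"
  obtain s dl where c: "c = (s, dl)" by (cases c)
  show ?thesis
  proof (cases "s \<in> Sfd")
    case False
    then have "c = fresh s" using I by (auto simp: Inv_def valid_def c fresh_def init_delay_def)
    have sA: "s \<in> Areach P F Sfd G s0" using I by (auto simp: Inv_def c)
    have "Q (Suc KK) c \<le> Q KK c" by (rule Q_mono) simp
    also have "\<dots> \<le> rho" using rho_ge[OF sA] \<open>c = fresh s\<close> by simp
    finally have "Q (Suc KK) c \<le> rho" .
    then show ?thesis unfolding beta_def by (simp add: le_max_iff_disj)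
  next
    case True
    have dl: "dl \<le> ereal Dm" using I True by (auto simp: Inv_def valid_def c)
    define h where "h x = (if fst (trans Sfd d c x) \<in> G then 0 else Q KK (trans Sfd d c x))" for x
    have hm[measurable]: "h \<in> borel_measurable M" unfolding h_def by measurable
    have hle: "AE x in M. h x \<le> 1" by (auto simp: h_def Q_le1)
    have E[measurable]: "Measurable.pred M (\<lambda>x. \<not> ereal (fst x) < dl)" by measurable
    have hr: "AE x in M. \<not> ereal (fst x) < dl \<longrightarrow> h x \<le> rho"
      using AE_good'
    proof eventually_elim
      case (elim x)
      show ?case
      proof
        assume ge: "\<not> ereal (fst x) < dl"
        have tr: "trans Sfd d c x = fresh (snd (snd x) s)"
          using ge by (auto simp: trans_def c fresh_def split: prod.splits)
        have ed: "edge P F Sfd s (snd (snd x) s)" using trans_good[of c x] I elim tr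
          by (auto simp: Inv_def c fresh_def)
        show "h x \<le> rho"
        proof (cases "snd (snd x) s \<in> G")
          case True then show ?thesis by (simp add: h_def tr fresh_def)
        next
          case False
          then have "snd (snd x) s \<in> Areach P F Sfd G s0"
            using I ed by (auto simp: Inv_def c intro: Areach.AS)
          then show ?thesis using False rho_ge by (simp add: h_def tr fresh_def)
        qed
      qed
    qed
    have "Q (Suc KK) c = (\<integral>\<^sup>+x. h x \<partial>M)" unfolding Q_Suc h_def ..
    also have "\<dots> \<le> 1 - (1 - rho) * emeasure M {x\<in>space M. \<not> ereal (fst x) < dl}"
      by (rule int_gap[OF prob_M hm hle E hr])
    also have "\<dots> \<le> 1 - (1 - rho) * e0"
      unfolding e0_def using F_fire_lb[OF dl] by (intro ennreal_minus_mono mult_left_mono) auto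
    also have "\<dots> \<le> beta" by (simp add: beta_def)
    finally show ?thesis .
  qed
qed

lemma Q_geom: "Inv c \<Longrightarrow> Q (m * Suc KK) c \<le> beta ^ m"
proof (induction m arbitrary: c)
  case 0
  then show ?case by (simp add: Q_0)
next
  case (Suc m)
  have "Q (Suc KK + m * Suc KK) c \<le> beta ^ m * Q (Suc KK) c"
    by (rule Q_T[where I=Inv, OF Inv_step Suc.IH Suc.prems])
  also have "\<dots> \<le> beta ^ m * beta" using bound[OF Suc.prems] by (intro mult_left_mono) auto
  finally have "Q (Suc KK + m * Suc KK) c \<le> beta ^ m * beta" .
  moreover have "Suc m * Suc KK = Suc KK + m * Suc KK" by simp
  ultimately show ?case by (simp only: power_Suc mult.commute)
qed


lemma beta_real: "\<exists>b. 0 \<le> b \<and> b < 1 \<and> beta = ennreal b"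
proof -
  have "beta < top" using beta_lt1 ennreal_one_less_top by (rule less_trans)
  then obtain b where b: "b \<ge> 0" "beta = ennreal b" unfolding less_top_ennreal by blast
  have "b < 1" using beta_lt1 unfolding b(2) by (rule ennreal_less_one_iff[THEN iffD1])
  with b show ?thesis by auto
qed

lemma Q_sum_fin: "Inv c \<Longrightarrow> (\<Sum>i. Q i c) < top"
proof -
  assume I: "Inv c"
  obtain b where b: "0 \<le> b" "b < 1" "beta = ennreal b" using beta_real by auto
  show ?thesis
  proof (rule sum_block_bound[of "Suc KK" b])
    fix i
    have "i div Suc KK * Suc KK \<le> i" by (rule div_times_less_eq_dividend)
    then have "Q i c \<le> Q (i div Suc KK * Suc KK) c" by (rule Q_mono)
    also have "\<dots> \<le> beta ^ (i div Suc KK)" by (rule Q_geom[OF I])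
    finally show "Q i c \<le> ennreal (b ^ (i div Suc KK))" using b by (simp add: ennreal_power)
  qed (use b in auto)
qed

lemma Qi_zero: "Inv c \<Longrightarrow> Qi c = 0"
proof -
  assume I: "Inv c"
  obtain b where b: "0 \<le> b" "b < 1" "beta = ennreal b" using beta_real by auto
  have le: "Qi c \<le> ennreal (b ^ m)" for m
  proof -
    have "Qi c \<le> Q (m * Suc KK) c" by (rule Qi_le_Q)
    also have "\<dots> \<le> beta ^ m" by (rule Q_geom[OF I])
    finally show ?thesis using b by (simp add: ennreal_power)
  qed
  have "(\<lambda>m. ennreal (b ^ m)) \<longlonglongrightarrow> ennreal 0"
    using b by (intro tendsto_ennrealI LIMSEQ_power_zero) auto
  then have "Qi c \<le> ennreal 0" using le by (intro LIMSEQ_le_const) auto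
  then show ?thesis by simp
qed

end


lemma Eabs: "(\<integral>\<^sup>+t. ennreal \<bar>t\<bar> \<partial>De) < top"
proof -
  have "(\<integral>\<^sup>+t. ennreal \<bar>t\<bar> \<partial>De) = (\<integral>\<^sup>+t. ennreal (exponential_density lam t) * ennreal \<bar>t\<bar> \<partial>lborel)"
    by (rule nn_integral_density) (auto simp: exponential_density_nonneg lam_pos)
  also have "\<dots> = (\<integral>\<^sup>+t. ennreal (exponential_density lam t * t ^ 1) \<partial>lborel)"
  proof (intro nn_integral_cong)
    fix t :: real
    show "ennreal (exponential_density lam t) * ennreal \<bar>t\<bar> = ennreal (exponential_density lam t * t ^ 1)"
    proof (cases "t < 0")
      case False
      then show ?thesis using lam_pos by (simp add: exponential_density_def ennreal_mult'')
    qed (simp add: exponential_density_def)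
  qed
  also have "\<dots> = fact (0 + 1) / (fact 0 * lam ^ 1)"
    by (rule nn_integral_erlang_ith_moment[OF lam_pos])
  also have "\<dots> < top" by simp
  finally show ?thesis .
qed

context
  fixes R :: "'s \<Rightarrow> real" and IP IF :: "'s \<Rightarrow> 's \<Rightarrow> real"
  assumes cs: "cost_structure R IP IF"
begin

definition Rm where "Rm = (\<Sum>s\<in>UNIV. R s)"
definition Im where "Im = (\<Sum>s\<in>UNIV. \<Sum>t\<in>UNIV. IP s t + IF s t)"
definition gg :: "real \<times> ('s \<Rightarrow> 's) \<times> ('s \<Rightarrow> 's) \<Rightarrow> ennreal" where
  "gg x = ennreal (Rm * \<bar>fst x\<bar> + Im)"

lemma R_nn: "0 \<le> R s" and IP_nn: "0 \<le> IP s t" and IF_nn: "0 \<le> IF s t"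
  using cs by (auto simp: cost_structure_def)

lemma R_le: "R s \<le> Rm"
  unfolding Rm_def by (rule member_le_sum) (auto simp: R_nn)

lemma I_le: "IP s t + IF s t \<le> Im"
proof -
  have "IP s t + IF s t \<le> (\<Sum>t\<in>UNIV. IP s t + IF s t)"
    by (rule member_le_sum) (auto intro: add_nonneg_nonneg IP_nn IF_nn)
  also have "\<dots> \<le> Im" unfolding Im_def
    by (rule member_le_sum[where f="\<lambda>s. \<Sum>t\<in>UNIV. IP s t + IF s t"]) (auto intro!: sum_nonneg add_nonneg_nonneg IP_nn IF_nn)
  finally show ?thesis .
qed

lemma IP_le: "IP s t \<le> Im" using I_le[of s t] IF_nn[of s t] by linarith
lemma IF_le: "IF s t \<le> Im" using I_le[of s t] IP_nn[of s t] by linarith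

lemma step_cost_le: "step_cost R IP IF c x \<le> gg x"
proof -
  obtain s dl where c: "c = (s, dl)" by (cases c)
  obtain t ps fs where xx: "x = (t, ps, fs)" by (cases x)
  have Rs: "0 \<le> R s" "R s \<le> Rm" by (rule R_nn, rule R_le)
  have tR: "t * R s \<le> Rm * \<bar>t\<bar>"
  proof -
    have "t * R s \<le> \<bar>t\<bar> * R s" using Rs by (intro mult_right_mono) auto
    also have "\<dots> \<le> \<bar>t\<bar> * Rm" using Rs by (intro mult_left_mono) auto
    finally show ?thesis by (simp add: mult.commute)
  qed
  show ?thesis
  proof (cases "ereal t < dl")
    case True
    then show ?thesis using tR IP_le[of s "ps s"]
      by (auto simp: step_cost_def c xx gg_def intro!: ennreal_leI)
  next
    case False
    have dR: "real_of_ereal dl * R s \<le> Rm * \<bar>t\<bar>"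
    proof (cases dl)
      case (real r)
      then have "r \<le> t" using False by simp
      show ?thesis
      proof (cases "r \<ge> 0")
        case True
        then have "r * R s \<le> t * R s" using \<open>r \<le> t\<close> Rs by (intro mult_right_mono) auto
        then show ?thesis using tR real by simp
      next
        case False
        then have "r * R s \<le> 0" using Rs by (simp add: mult_nonpos_nonneg)
        moreover have "0 \<le> Rm * \<bar>t\<bar>" using Rs by simp
        ultimately show ?thesis using real by simp
      qed
    next
      case PInf then show ?thesis using False by simp
    next
      case MInf then show ?thesis using Rs by simp
    qed
    then show ?thesis using False IF_le[of s "fs s"]
      by (auto simp: step_cost_def c xx gg_def intro!: ennreal_leI)
  qed
qed

lemma gg_meas[measurable]: "gg \<in> borel_measurable M"
  unfolding gg_def by measurable

lemma Eg_fin: "(\<integral>\<^sup>+x. gg x \<partial>M) < top"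
proof -
  have Rm0: "0 \<le> Rm" using R_le[of undefined] R_nn[of undefined] by linarith
  have Im0: "0 \<le> Im" using I_le[of undefined undefined] IP_nn[of undefined undefined] IF_nn[of undefined undefined] by linarith
  have "(\<integral>\<^sup>+x. gg x \<partial>M) = (\<integral>\<^sup>+t. \<integral>\<^sup>+y. gg (t, y) \<partial>measure_pmf (pair_pmf qP qF) \<partial>De)"
    unfolding M_eq
    by (rule sigma_finite_measure.nn_integral_fst[OF prob_space_imp_sigma_finite[OF prob_space_measure_pmf], symmetric])
       (simp add: gg_def)
  also have "\<dots> = (\<integral>\<^sup>+t. ennreal Rm * ennreal \<bar>t\<bar> + ennreal Im \<partial>De)"
    using Rm0 Im0 by (intro nn_integral_cong) (simp add: gg_def measure_pmf.emeasure_space_1 ennreal_plus[symmetric] ennreal_mult[symmetric] del: ennreal_plus)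
  also have "\<dots> = ennreal Rm * (\<integral>\<^sup>+t. ennreal \<bar>t\<bar> \<partial>De) + ennreal Im * emeasure De (space De)"
    by (subst nn_integral_add) (auto simp: nn_integral_cmult)
  also have "\<dots> < top"
    using Eabs prob_space.emeasure_space_1[OF De_prob] by (simp add: ennreal_mult_less_top)
  finally show ?thesis .
qed


lemma comp_meas[measurable]: "(\<lambda>\<omega>. \<omega> i) \<in> measurable \<Omega> M"
  unfolding run_space_def by (rule measurable_component_singleton) simp

lemma cn: "case_nat x \<omega> (Suc i) = \<omega> i" by simp

lemma cost_int: "(\<integral>\<^sup>+\<omega>. (if nohit i c \<omega> then gg (\<omega> i) else 0) \<partial>\<Omega>) = Q i c * (\<integral>\<^sup>+x. gg x \<partial>M)"
proof (induction i arbitrary: c)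
  case 0
  have "(\<integral>\<^sup>+\<omega>. (if nohit 0 c \<omega> then gg (\<omega> 0) else 0) \<partial>\<Omega>) = (\<integral>\<^sup>+\<omega>. gg (\<omega> 0) \<partial>\<Omega>)"
    by (simp add: nohit_def)
  also have "\<dots> = (\<integral>\<^sup>+x. \<integral>\<^sup>+\<omega>. gg x \<partial>\<Omega> \<partial>M)"
    by (subst nn_integral_split) simp_all
  also have "\<dots> = (\<integral>\<^sup>+x. gg x \<partial>M)" using Omega_space1 by simp
  finally show ?case by (simp add: Q_0)
next
  case (Suc i)
  have "(\<integral>\<^sup>+\<omega>. (if nohit (Suc i) c \<omega> then gg (\<omega> (Suc i)) else 0) \<partial>\<Omega>)
      = (\<integral>\<^sup>+x. \<integral>\<^sup>+\<omega>. (if nohit (Suc i) c (case_nat x \<omega>) then gg (case_nat x \<omega> (Suc i)) else 0) \<partial>\<Omega> \<partial>M)"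
    by (subst nn_integral_split) simp_all
  also have "\<dots> = (\<integral>\<^sup>+x. (if fst (trans Sfd d c x) \<in> G then 0 else Q i (trans Sfd d c x)) * (\<integral>\<^sup>+x. gg x \<partial>M) \<partial>M)"
    by (intro nn_integral_cong) (simp add: nohit_Suc Suc.IH[symmetric] cn cong: if_cong)
  also have "\<dots> = Q (Suc i) c * (\<integral>\<^sup>+x. gg x \<partial>M)"
    unfolding Q_Suc by (rule nn_integral_multc) measurable
  finally show ?case .
qed

lemma total_le:
  assumes "\<not> nohitinf (sI, init_delay Sfd d sI) \<omega>"
  shows "total_cost Sfd sI G R IP IF d \<omega> \<le> (\<Sum>i. if nohit i (sI, init_delay Sfd d sI) \<omega> then gg (\<omega> i) else 0)"
proof -
  let ?c = "(sI, init_delay Sfd d sI)"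
  have ex: "\<exists>n>0. fst (cfg Sfd d sI \<omega> n) \<in> G" using assms by (auto simp: nohitinf_def cfg_run)
  define T where "T = (LEAST n. n > 0 \<and> fst (cfg Sfd d sI \<omega> n) \<in> G)"
  have nh: "nohit i ?c \<omega>" if "i < T" for i
    unfolding nohit_def
  proof
    fix n assume n: "n \<in> {1..i}"
    show "fst (run ?c \<omega> n) \<notin> G"
    proof
      assume "fst (run ?c \<omega> n) \<in> G"
      then have "T \<le> n" unfolding T_def using n by (intro Least_le) (auto simp: cfg_run)
      then show False using n that by simp
    qed
  qed
  have "total_cost Sfd sI G R IP IF d \<omega> = (\<Sum>i<T. step_cost R IP IF (cfg Sfd d sI \<omega> i) (\<omega> i))"
    using ex by (simp add: total_cost_def T_def)
  also have "\<dots> \<le> (\<Sum>i<T. if nohit i ?c \<omega> then gg (\<omega> i) else 0)"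
    using nh step_cost_le by (intro sum_mono) auto
  also have "\<dots> \<le> (\<Sum>i. if nohit i ?c \<omega> then gg (\<omega> i) else 0)"
    by (intro sum_le_suminf) auto
  finally show ?thesis .
qed

lemma E_fin:
  assumes nb: "\<not> Bad P F Sfd G sI"
  shows "expected_cost lam P Sfd F sI G R IP IF d < top"
proof -
  let ?c = "(sI, init_delay Sfd d sI)"
  have I: "Inv sI ?c" by (rule Inv_init[OF nb])
  have "Qi ?c = 0" by (rule Qi_zero[OF nb I])
  then have "AE \<omega> in \<Omega>. (if nohitinf ?c \<omega> then 1 else 0 :: ennreal) = 0"
    unfolding Qi_def by (subst (asm) nn_integral_0_iff_AE) auto
  then have ae: "AE \<omega> in \<Omega>. \<not> nohitinf ?c \<omega>" by (auto elim!: AE_mp)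
  have "expected_cost lam P Sfd F sI G R IP IF d = (\<integral>\<^sup>+\<omega>. total_cost Sfd sI G R IP IF d \<omega> \<partial>\<Omega>)"
    by (simp add: expected_cost_def)
  also have "\<dots> \<le> (\<integral>\<^sup>+\<omega>. (\<Sum>i. if nohit i ?c \<omega> then gg (\<omega> i) else 0) \<partial>\<Omega>)"
  proof (rule nn_integral_mono_AE)
    show "AE \<omega> in \<Omega>. total_cost Sfd sI G R IP IF d \<omega> \<le> (\<Sum>i. if nohit i ?c \<omega> then gg (\<omega> i) else 0)"
      using ae by eventually_elim (rule total_le)
  qed
  also have "\<dots> = (\<Sum>i. \<integral>\<^sup>+\<omega>. (if nohit i ?c \<omega> then gg (\<omega> i) else 0) \<partial>\<Omega>)"
    by (rule nn_integral_suminf) measurable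
  also have "\<dots> = (\<Sum>i. Q i ?c) * (\<integral>\<^sup>+x. gg x \<partial>M)"
    by (simp add: cost_int)
  also have "\<dots> < top"
    using Q_sum_fin[OF nb I] Eg_fin by (simp add: ennreal_mult_less_top)
  finally show ?thesis .
qed

end

lemma E_inf:
  assumes b: "Bad P F Sfd G sI"
  shows "expected_cost lam P Sfd F sI G R IP IF d = top"
proof -
  let ?c = "(sI, init_delay Sfd d sI)"
  have pos: "Qi ?c > 0" by (rule Qi_pos[OF Bad_avoidZ[OF b] valid_init]) simp
  have "top * Qi ?c = (\<integral>\<^sup>+\<omega>. top * (if nohitinf ?c \<omega> then 1 else 0) \<partial>\<Omega>)"
    unfolding Qi_def by (rule nn_integral_cmult[symmetric]) measurable
  also have "\<dots> \<le> (\<integral>\<^sup>+\<omega>. total_cost Sfd sI G R IP IF d \<omega> \<partial>\<Omega>)"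
    by (intro nn_integral_mono) (auto simp: total_cost_def nohitinf_def cfg_run)
  also have "\<dots> = expected_cost lam P Sfd F sI G R IP IF d" by (simp add: expected_cost_def)
  finally show ?thesis using pos by (simp add: top_unique)
qed

end

theorem lemma1:
  fixes lam :: real and P F :: "'s::finite \<Rightarrow> 's \<Rightarrow> real" and Sfd G :: "'s set" and s_in :: 's
    and R :: "'s \<Rightarrow> real" and IP IF :: "'s \<Rightarrow> 's \<Rightarrow> real" and d d' :: "'s \<Rightarrow> real"
  assumes "fdCTMC lam P Sfd F"
    and "cost_structure R IP IF"
    and "\<forall>s\<in>Sfd. d s > 0"
    and "\<forall>s\<in>Sfd. d' s > 0"
  shows "expected_cost lam P Sfd F s_in G R IP IF d = \<infinity> \<longleftrightarrow>
         expected_cost lam P Sfd F s_in G R IP IF d' = \<infinity>"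
proof -
  interpret f1: fdcd lam P F Sfd G d
    using assms(1,3) by (simp add: fdcd_def fdc_def fdcd_axioms_def)
  interpret f2: fdcd lam P F Sfd G d'
    using assms(1,4) by (simp add: fdcd_def fdc_def fdcd_axioms_def)
  have e1: "expected_cost lam P Sfd F s_in G R IP IF d = \<infinity> \<longleftrightarrow> Bad P F Sfd G s_in"
    using f1.E_inf[of s_in R IP IF] f1.E_fin[OF assms(2), of s_in] by (cases "Bad P F Sfd G s_in") auto
  have e2: "expected_cost lam P Sfd F s_in G R IP IF d' = \<infinity> \<longleftrightarrow> Bad P F Sfd G s_in"
    using f2.E_inf[of s_in R IP IF] f2.E_fin[OF assms(2), of s_in] by (cases "Bad P F Sfd G s_in") auto
  show ?thesis using e1 e2 by simp
qed

end
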